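(* Let $\pi_2=2\int_0^1\frac{\mathrm{d}t}{\sqrt{1-t^4}}$ and let $\mathrm{sleaf}_2:\mathbb{R}\to\mathbb{R}$ be the leaf function of basis $2$. Let $m$ be an integer, let $l$ be real with $s:=\mathrm{sleaf}_2(l)\neq0$. (i) If $\frac{\pi_2}{2}(4m+1)\le l\le\frac{\pi_2}{2}(4m+3)$, then $$\Bigl(\mathrm{sleaf}_2\Bigl(\frac l2\Bigr)\Bigr)^2=\frac{-1-\sqrt{1-s^2}}{s^2}+\frac{\sqrt{1+s^2}}{s^2}\sqrt{2-s^2+2\sqrt{1-s^2}}.$$ (ii) If $\frac{\pi_2}{2}(4m-1)\le l\le\frac{\pi_2}{2}(4m+1)$, then $$\Bigl(\mathrm{sleaf}_2\Bigl(\frac l2\Bigr)\Bigr)^2=\frac{-1+\sqrt{1-s^2}}{s^2}+\frac{\sqrt{1+s^2}}{s^2}\sqrt{2-s^2-2\sqrt{1-s^2}}.$$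
   Context: For a natural number $n$, the leaf function $\mathrm{sleaf}_n:\mathbb{R}\to\mathbb{R}$ is the solution of $\frac{\mathrm{d}^2r}{\mathrm{d}l^2}=-n\,r^{2n-1}$ with $r(0)=0$, $r'(0)=1$; it is periodic with period $2\pi_n$, where $\pi_n=2\int_0^1\frac{\mathrm{d}t}{\sqrt{1-t^{2n}}}$, and on $[-\pi_n/2,\pi_n/2]$ it is the inverse of $r\mapsto\int_0^r\frac{\mathrm{d}t}{\sqrt{1-t^{2n}}}$. *)

theory Defs
  imports "HOL-Analysis.Analysis"
begin

text \<open>pi_n = 2 * int_0^1 dt / sqrt(1 - t^(2n)) (Henstock-Kurzweil integral; the
  integrand is nonnegative and improperly integrable).\<close>
definition pi_leaf :: "nat \<Rightarrow> real" where
  "pi_leaf n = 2 * integral {0..1} (\<lambda>t. 1 / sqrt (1 - t ^ (2 * n)))"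

definition sleaf :: "nat \<Rightarrow> real \<Rightarrow> real" where
  "sleaf n = (THE r. \<exists>r'. r 0 = 0 \<and> r' 0 = 1 \<and>
      (\<forall>x. (r has_real_derivative r' x) (at x)) \<and>
      (\<forall>x. (r' has_real_derivative (- real n * r x ^ (2 * n - 1))) (at x)))"

end

theory Submission imports Defs begin

lemma energy_const:
  fixes r q :: "real \<Rightarrow> real"
  assumes dr: "\<And>x. (r has_real_derivative q x) (at x)"
    and dq: "\<And>x. (q has_real_derivative (-2 * r x ^ 3)) (at x)"
  shows "q x ^ 2 + r x ^ 4 = q 0 ^ 2 + r 0 ^ 4"
proof -
  have "\<forall>x. ((\<lambda>x. q x ^ 2 + r x ^ 4) has_real_derivative 0) (at x)"
  proof
    fix x
    have "((\<lambda>x. q x ^ 2 + r x ^ 4) has_real_derivative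
       (2 * q x * (-2 * r x ^ 3) + 4 * r x ^ 3 * q x)) (at x)"
      by (auto intro!: derivative_eq_intros dr dq simp: algebra_simps)
    then show "((\<lambda>x. q x ^ 2 + r x ^ 4) has_real_derivative 0) (at x)"
      by (simp add: algebra_simps)
  qed
  then show ?thesis by (rule DERIV_isconst_all)
qed

lemma bound_from_energy:
  fixes r q :: real
  assumes "q ^ 2 + r ^ 4 = 1"
  shows "\<bar>r\<bar> \<le> 1"
proof (rule ccontr)
  assume "\<not> \<bar>r\<bar> \<le> 1"
  then have "1 < \<bar>r\<bar>" by simp
  then have "1 < \<bar>r\<bar> ^ 4" by (intro one_less_power) auto
  moreover have "\<bar>r\<bar> ^ 4 = r ^ 4" by (metis power_abs abs_of_nonneg zero_le_power_eq_numeral even_numeral abs_power_minus power_even_abs_numeral)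
  ultimately have "1 < r ^ 4" by simp
  moreover have "0 \<le> q ^ 2" by simp
  ultimately show False using assms by linarith
qed

lemma cube_diff_bound:
  fixes a b :: real
  assumes "\<bar>a\<bar> \<le> 1" "\<bar>b\<bar> \<le> 1"
  shows "\<bar>a ^ 3 - b ^ 3\<bar> \<le> 3 * \<bar>a - b\<bar>"
proof -
  have e: "a ^ 3 - b ^ 3 = (a - b) * (a\<^sup>2 + a * b + b\<^sup>2)" by (simp add: power2_eq_square power3_eq_cube algebra_simps)
  have "\<bar>a\<^sup>2 + a * b + b\<^sup>2\<bar> \<le> \<bar>a\<^sup>2\<bar> + \<bar>a * b\<bar> + \<bar>b\<^sup>2\<bar>" by linarith
  also have "\<dots> \<le> 1 + 1 + 1"
    using assms by (intro add_mono) (auto simp: abs_mult abs_square_le_1 intro: mult_le_one)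
  finally have "\<bar>a\<^sup>2 + a * b + b\<^sup>2\<bar> \<le> 3" by simp
  then show ?thesis unfolding e abs_mult
    by (metis abs_ge_zero mult.commute mult_left_mono)
qed

lemma ode_unique:
  fixes r1 q1 r2 q2 :: "real \<Rightarrow> real"
  assumes dr1: "\<And>x. (r1 has_real_derivative q1 x) (at x)"
    and dq1: "\<And>x. (q1 has_real_derivative (-2 * r1 x ^ 3)) (at x)"
    and dr2: "\<And>x. (r2 has_real_derivative q2 x) (at x)"
    and dq2: "\<And>x. (q2 has_real_derivative (-2 * r2 x ^ 3)) (at x)"
    and b1: "\<And>x. \<bar>r1 x\<bar> \<le> 1" and b2: "\<And>x. \<bar>r2 x\<bar> \<le> 1"
    and i1: "r1 0 = r2 0" and i2: "q1 0 = q2 0"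
  shows "r1 x = r2 x"
proof -
  define E where "E x = (r1 x - r2 x)^2 + (q1 x - q2 x)^2" for x
  define E' where "E' x = 2 * (r1 x - r2 x) * (q1 x - q2 x) + 2 * (q1 x - q2 x) * (-2 * r1 x ^ 3 - (-2 * r2 x ^ 3))" for x
  have dE: "(E has_real_derivative E' x) (at x)" for x
    unfolding E_def E'_def
    by (auto intro!: derivative_eq_intros dr1 dr2 dq1 dq2 simp: algebra_simps)
  have E0: "E 0 = 0" using i1 i2 by (simp add: E_def)
  have Enn: "0 \<le> E x" for x by (simp add: E_def)
  have bnd: "\<bar>E' x\<bar> \<le> 7 * E x" for x
  proof -
    let ?d = "r1 x - r2 x" and ?e = "q1 x - q2 x"
    have c: "\<bar>r1 x ^ 3 - r2 x ^ 3\<bar> \<le> 3 * \<bar>?d\<bar>" by (rule cube_diff_bound[OF b1 b2])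
    have eq: "E' x = 2 * ?d * ?e - 4 * ?e * (r1 x ^ 3 - r2 x ^ 3)" by (simp add: E'_def algebra_simps)
    have "\<bar>E' x\<bar> \<le> \<bar>2 * ?d * ?e\<bar> + \<bar>4 * ?e * (r1 x ^ 3 - r2 x ^ 3)\<bar>"
      unfolding eq by (rule abs_triangle_ineq4)
    then have "\<bar>E' x\<bar> \<le> 2 * \<bar>?d\<bar> * \<bar>?e\<bar> + 4 * \<bar>?e\<bar> * \<bar>r1 x ^ 3 - r2 x ^ 3\<bar>"
      by (simp only: abs_mult abs_numeral)
    also have "\<dots> \<le> 2 * \<bar>?d\<bar> * \<bar>?e\<bar> + 4 * \<bar>?e\<bar> * (3 * \<bar>?d\<bar>)"
      using c by (intro add_left_mono mult_left_mono) auto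
    also have "\<dots> = 14 * (\<bar>?d\<bar> * \<bar>?e\<bar>)" by simp
    also have "\<dots> \<le> 7 * E x"
    proof -
      have "0 \<le> (\<bar>?d\<bar> - \<bar>?e\<bar>)^2" by simp
      then have "2 * (\<bar>?d\<bar> * \<bar>?e\<bar>) \<le> \<bar>?d\<bar>^2 + \<bar>?e\<bar>^2" by (simp add: power2_diff)
      then show ?thesis by (simp add: E_def)
    qed
    finally show ?thesis .
  qed
  have "E x = 0"
  proof (cases "0 \<le> x")
    case True
    define G where "G x = E x * exp (-7 * x)" for x
    have "G x \<le> G 0"
    proof (rule DERIV_nonpos_imp_nonincreasing[OF True])
      fix t
      have "(G has_real_derivative (E' t * exp (-7*t) + E t * (exp (-7*t) * (-7)))) (at t)"
        unfolding G_def by (auto intro!: derivative_eq_intros dE)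
      moreover have "E' t * exp (-7*t) + E t * (exp (-7*t) * (-7)) \<le> 0"
      proof -
        have "E' t \<le> 7 * E t" using bnd[of t] by linarith
        then have "E' t * exp (-7*t) \<le> 7 * E t * exp (-7*t)" by (simp add: mult_right_mono)
        then show ?thesis by (simp add: algebra_simps)
      qed
      ultimately show "\<exists>y. (G has_real_derivative y) (at t) \<and> y \<le> 0" by blast
    qed
    then have "E x * exp (-7 * x) \<le> 0" using E0 by (simp add: G_def)
    then have "E x \<le> 0" by (simp add: mult_le_0_iff)
    then show ?thesis using Enn[of x] by simp
  next
    case False
    then have x0: "x \<le> 0" by simp
    define G where "G x = E x * exp (7 * x)" for x
    have "G x \<le> G 0"
    proof (rule DERIV_nonneg_imp_nondecreasing[OF x0])
      fix t
      have "(G has_real_derivative (E' t * exp (7*t) + E t * (exp (7*t) * 7))) (at t)"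
        unfolding G_def by (auto intro!: derivative_eq_intros dE)
      moreover have "E' t * exp (7*t) + E t * (exp (7*t) * 7) \<ge> 0"
      proof -
        have "-7 * E t \<le> E' t" using bnd[of t] by linarith
        then have "(-7 * E t) * exp (7*t) \<le> E' t * exp (7*t)" by (rule mult_right_mono) simp
        then show ?thesis by (simp add: algebra_simps)
      qed
      ultimately show "\<exists>y. (G has_real_derivative y) (at t) \<and> y \<ge> 0" by blast
    qed
    then have "E x * exp (7 * x) \<le> 0" using E0 by (simp add: G_def)
    then have "E x \<le> 0" by (simp add: mult_le_0_iff)
    then show ?thesis using Enn[of x] by simp
  qed
  then have "(r1 x - r2 x)^2 = 0" unfolding E_def
    by (metis add_nonneg_eq_0_iff zero_le_power2)
  then show ?thesis by simp
qed


definition f0 :: "real \<Rightarrow> real" where "f0 t = 1 / sqrt (1 + (cos t)\<^sup>2)"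
definition Phi :: "real \<Rightarrow> real" where
  "Phi x = integral {0..x} f0 - integral {x..0} f0"

lemma sq1pos: "0 < 1 + (cos (t::real))\<^sup>2"
proof -
  have "0 \<le> (cos t)\<^sup>2" by simp
  then show ?thesis by linarith
qed

lemma sq1ne: "1 + (cos (t::real))\<^sup>2 \<noteq> 0" using sq1pos[of t] by linarith

lemma f0_cont: "continuous_on S f0"
  unfolding f0_def by (auto intro!: continuous_intros simp: sq1ne)

lemma f0_int: "f0 integrable_on {a..b}"
  by (rule integrable_continuous_real[OF f0_cont])

lemma Phi_alt:
  assumes "a \<le> 0" "a \<le> x"
  shows "Phi x = integral {a..x} f0 - integral {a..0} f0"
proof (cases "0 \<le> x")
  case True
  have "integral {a..0} f0 + integral {0..x} f0 = integral {a..x} f0"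
    using Henstock_Kurzweil_Integration.integral_combine[where a=a and c=0 and b=x and f=f0] assms True f0_int by simp
  moreover have "integral {x..0} f0 = 0"
  proof (cases "x = 0")
    case True then show ?thesis by simp
  next
    case False then have "{x..0} = ({}::real set)" using \<open>0 \<le> x\<close> by auto
    then show ?thesis by simp
  qed
  ultimately show ?thesis unfolding Phi_def by linarith
next
  case False
  have "integral {a..x} f0 + integral {x..0} f0 = integral {a..0} f0"
    using Henstock_Kurzweil_Integration.integral_combine[where a=a and c=x and b=0 and f=f0] assms False f0_int by simp
  moreover have "{0..x} = ({}::real set)" using False by auto
  ultimately show ?thesis unfolding Phi_def by simp
qed

lemma Phi_deriv: "(Phi has_real_derivative f0 t) (at t)"
proof -
  define a where "a = min t 0 - 1"
  define b where "b = max t 0 + 1"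
  have "((\<lambda>x. integral {a..x} f0) has_real_derivative f0 t) (at t within {a..b})"
    by (rule integral_has_real_derivative[OF f0_cont]) (auto simp: a_def b_def)
  moreover have "at t within {a..b} = at t"
    by (rule at_within_interior) (auto simp: a_def b_def)
  ultimately have "((\<lambda>x. integral {a..x} f0) has_real_derivative f0 t) (at t)" by simp
  then have "((\<lambda>x. integral {a..x} f0 - integral {a..0} f0) has_real_derivative f0 t - 0) (at t)"
    by (intro derivative_intros) auto
  then have "((\<lambda>x. integral {a..x} f0 - integral {a..0} f0) has_real_derivative f0 t) (at t)"
    by simp
  then show ?thesis
    by (rule has_field_derivative_transform_within_open[where S="{a<..}"])
       (auto simp: a_def intro!: Phi_alt[symmetric])
qed

lemma f0_pos: "0 < f0 t" unfolding f0_def using sq1pos by simp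

lemma f0_ge: "1 / sqrt 2 \<le> f0 t"
proof -
  have "1 + (cos t)\<^sup>2 \<le> 2" using cos_le_one[of t] abs_cos_le_one[of t]
    by (simp add: abs_square_le_1)
  then have "sqrt (1 + (cos t)\<^sup>2) \<le> sqrt 2" by simp
  then show ?thesis unfolding f0_def using sq1pos[of t]
    by (intro divide_left_mono) auto
qed

lemma Phi0: "Phi 0 = 0" by (simp add: Phi_def)

lemma Phi_cont: "isCont Phi x" using Phi_deriv by (rule DERIV_isCont)

lemma Phi_strict: "a < b \<Longrightarrow> Phi a < Phi b"
  by (rule DERIV_pos_imp_increasing) (use Phi_deriv f0_pos in blast)+

lemma Phi_shift_pi: "Phi (x + pi) = Phi x + Phi pi"
proof -
  have "\<forall>x. ((\<lambda>x. Phi (x + pi) - Phi x) has_real_derivative 0) (at x)"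
  proof
    fix x
    have "((\<lambda>x. Phi (x + pi) - Phi x) has_real_derivative f0 (x + pi) * 1 - f0 x) (at x)"
      by (auto intro!: derivative_eq_intros DERIV_chain2[OF Phi_deriv] Phi_deriv)
    moreover have "f0 (x + pi) = f0 x" by (simp add: f0_def)
    ultimately show "((\<lambda>x. Phi (x + pi) - Phi x) has_real_derivative 0) (at x)" by simp
  qed
  then have "Phi (x + pi) - Phi x = Phi (0 + pi) - Phi 0" by (rule DERIV_isconst_all)
  then show ?thesis by (simp add: Phi0)
qed

lemma Phi_refl: "Phi (pi - x) = Phi pi - Phi x"
proof -
  have "\<forall>x. ((\<lambda>x. Phi (pi - x) + Phi x) has_real_derivative 0) (at x)"
  proof
    fix x
    have "((\<lambda>x. Phi (pi - x) + Phi x) has_real_derivative f0 (pi - x) * (0 - 1) + f0 x) (at x)"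
      by (auto intro!: derivative_eq_intros DERIV_chain2[OF Phi_deriv] Phi_deriv)
    moreover have "f0 (pi - x) = f0 x" by (simp add: f0_def)
    ultimately show "((\<lambda>x. Phi (pi - x) + Phi x) has_real_derivative 0) (at x)" by simp
  qed
  then have "Phi (pi - x) + Phi x = Phi (pi - 0) + Phi 0" by (rule DERIV_isconst_all)
  then show ?thesis by (simp add: Phi0)
qed

lemma Phi_odd: "Phi (- x) = - Phi x"
proof -
  have "\<forall>x. ((\<lambda>x. Phi (- x) + Phi x) has_real_derivative 0) (at x)"
  proof
    fix x
    have "((\<lambda>x. Phi (- x) + Phi x) has_real_derivative f0 (- x) * (- 1) + f0 x) (at x)"
      by (auto intro!: derivative_eq_intros DERIV_chain2[OF Phi_deriv] Phi_deriv)
    moreover have "f0 (- x) = f0 x" by (simp add: f0_def)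
    ultimately show "((\<lambda>x. Phi (- x) + Phi x) has_real_derivative 0) (at x)" by simp
  qed
  then have "Phi (- x) + Phi x = Phi (- 0) + Phi 0" by (rule DERIV_isconst_all)
  then show ?thesis by (simp add: Phi0)
qed

definition P0 :: real where "P0 = Phi pi"

lemma P0_pos: "0 < P0" using Phi_strict[of 0 pi] by (simp add: P0_def Phi0)

lemma Phi_half: "Phi (pi/2) = P0 / 2"
  using Phi_refl[of "pi/2"] by (simp add: P0_def)

lemma Phi_shift_int: "Phi (x + of_int k * pi) = Phi x + of_int k * P0"
proof (induction k arbitrary: x rule: int_induct[where k=0])
  case base then show ?case by simp
next
  case (step1 i)
  have "Phi (x + of_int (i + 1) * pi) = Phi ((x + of_int i * pi) + pi)" by (simp add: algebra_simps)
  also have "\<dots> = Phi x + of_int i * P0 + P0" using step1 Phi_shift_pi by (simp add: P0_def)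
  finally show ?case by (simp add: algebra_simps)
next
  case (step2 i)
  have "Phi (x + of_int (i - 1) * pi + pi) = Phi (x + of_int (i - 1) * pi) + P0"
    using Phi_shift_pi by (simp add: P0_def)
  moreover have "x + of_int (i - 1) * pi + pi = x + of_int i * pi" by (simp add: algebra_simps)
  ultimately show ?case using step2 by (simp add: algebra_simps)
qed

lemma Phi_surj: "\<exists>t. Phi t = y"
proof -
  define k where "k = \<lfloor>y / P0\<rfloor>"
  have k1: "of_int k * P0 \<le> y" using P0_pos unfolding k_def
    by (metis floor_divide_lower)
  have k2: "y \<le> (of_int k + 1) * P0" using P0_pos unfolding k_def
    by (metis floor_divide_upper less_eq_real_def)
  have "Phi (0 + of_int k * pi) \<le> y" using k1 Phi_shift_int[of 0 k] by (simp add: Phi0)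
  moreover have "y \<le> Phi (0 + of_int (k+1) * pi)" using k2 Phi_shift_int[of 0 "k+1"] by (simp add: Phi0)
  ultimately show ?thesis
    using IVT[of Phi "0 + of_int k * pi" y "0 + of_int (k+1) * pi"] Phi_cont
    by (auto simp: algebra_simps)
qed

definition T :: "real \<Rightarrow> real" where "T y = (THE t. Phi t = y)"

lemma Phi_inj: "Phi a = Phi b \<Longrightarrow> a = b"
  by (metis Phi_strict linorder_neqE_linordered_idom order_less_irrefl)

lemma Phi_T: "Phi (T y) = y"
  unfolding T_def by (rule theI') (use Phi_surj Phi_inj in blast)

lemma T_Phi: "T (Phi x) = x"
  using Phi_T Phi_inj by blast

lemma T_cont: "isCont T y"
proof -
  have "isCont T (Phi (T y))"
    by (rule isCont_inverse_function[where d=1]) (auto simp: T_Phi Phi_cont)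
  then show ?thesis by (simp add: Phi_T)
qed

lemma T_deriv: "(T has_real_derivative sqrt (1 + (cos (T y))\<^sup>2)) (at y)"
proof -
  have "(T has_real_derivative inverse (f0 (T y))) (at y)"
    by (rule DERIV_inverse_function[where a="y-1" and b="y+1"])
       (use f0_pos[of "T y"] in \<open>auto intro: Phi_deriv simp: Phi_T T_cont\<close>)
  then show ?thesis by (simp add: f0_def)
qed

lemma T_shift_int: "T (y + of_int k * P0) = T y + of_int k * pi"
  by (metis Phi_T Phi_shift_int T_Phi)

lemma T_odd: "T (- y) = - T y"
  by (metis Phi_T Phi_odd T_Phi)

lemma T_mono: "a \<le> b \<Longrightarrow> T a \<le> T b"
  by (metis Phi_T Phi_strict not_le)

definition R :: "real \<Rightarrow> real" where "R t = sin t / sqrt (1 + (cos t)\<^sup>2)"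
definition Pd :: "real \<Rightarrow> real" where "Pd t = 2 * cos t / (1 + (cos t)\<^sup>2)"
definition sl :: "real \<Rightarrow> real" where "sl x = R (T x)"
definition slp :: "real \<Rightarrow> real" where "slp x = Pd (T x)"

lemma alg1:
  fixes q c s :: real
  assumes "q > 0" "q\<^sup>2 = 1 + c\<^sup>2" "s\<^sup>2 + c\<^sup>2 = 1"
  shows "(c * q - (inverse q / 2 * (- 2 * c * s)) * s) / q\<^sup>2 = 2*c/(1+c\<^sup>2)/q"
proof -
  have "(c * q - (inverse q / 2 * (- 2 * c * s)) * s) = c * (q\<^sup>2 + s\<^sup>2) / q"
    using assms by (simp add: field_simps power2_eq_square) (metis distrib_left mult_1_right)
  also have "\<dots> = 2 * c / q" using assms by simp
  finally show ?thesis using assms by (simp add: field_simps power2_eq_square)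
qed

lemma R_deriv: "(R has_real_derivative 2 * cos t / (1 + (cos t)\<^sup>2) / sqrt (1 + (cos t)\<^sup>2)) (at t)"
proof -
  have d1: "((\<lambda>t. 1 + (cos t)\<^sup>2) has_real_derivative (- 2 * cos t * sin t)) (at t)"
    by (auto intro!: derivative_eq_intros)
  have d2: "((\<lambda>t. sqrt (1 + (cos t)\<^sup>2)) has_real_derivative
      inverse (sqrt (1 + (cos t)\<^sup>2)) / 2 * (- 2 * cos t * sin t)) (at t)"
    by (rule DERIV_chain2[OF DERIV_real_sqrt[OF sq1pos] d1])
  have qn: "sqrt (1 + (cos t)\<^sup>2) \<noteq> 0" using sq1pos[of t] by simp
  have d3: "(R has_real_derivative
     (cos t * sqrt (1 + (cos t)\<^sup>2) - inverse (sqrt (1 + (cos t)\<^sup>2)) / 2 * (- 2 * cos t * sin t) * sin t) /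
     (sqrt (1 + (cos t)\<^sup>2))\<^sup>2) (at t)"
    using DERIV_quotient[OF DERIV_sin d2 qn] unfolding R_def[abs_def] by (simp add: numeral_2_eq_2)
  have "(cos t * sqrt (1 + (cos t)\<^sup>2) - inverse (sqrt (1 + (cos t)\<^sup>2)) / 2 * (- 2 * cos t * sin t) * sin t) /
     (sqrt (1 + (cos t)\<^sup>2))\<^sup>2 = 2 * cos t / (1 + (cos t)\<^sup>2) / sqrt (1 + (cos t)\<^sup>2)"
    by (rule alg1) (use sq1pos[of t] in auto)
  with d3 show ?thesis by simp
qed

lemma sq_nonneg_le: "0 \<le> 1 + (cos (t::real))\<^sup>2" using sq1pos[of t] by linarith

lemma sl_deriv: "(sl has_real_derivative slp x) (at x)"
proof -
  have "(sl has_real_derivative 2 * cos (T x) / (1 + (cos (T x))\<^sup>2) / sqrt (1 + (cos (T x))\<^sup>2) * sqrt (1 + (cos (T x))\<^sup>2)) (at x)"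
    unfolding sl_def[abs_def] by (rule DERIV_chain2[OF R_deriv T_deriv])
  moreover have "sqrt (1 + (cos (T x))\<^sup>2) \<noteq> 0" using sq1pos[of "T x"] by simp
  ultimately show ?thesis by (simp add: slp_def Pd_def)
qed

lemma Pd_deriv: "(Pd has_real_derivative - 2 * (sin t)^3 / (1 + (cos t)\<^sup>2)\<^sup>2) (at t)"
proof -
  have d1: "((\<lambda>t. 1 + (cos t)\<^sup>2) has_real_derivative (- 2 * cos t * sin t)) (at t)"
    by (auto intro!: derivative_eq_intros)
  have d0: "((\<lambda>t. 2 * cos t) has_real_derivative (- 2 * sin t)) (at t)"
    by (auto intro!: derivative_eq_intros)
  have "(Pd has_real_derivative ((- 2 * sin t) * (1 + (cos t)\<^sup>2) - (- 2 * cos t * sin t) * (2 * cos t)) / (1 + (cos t)\<^sup>2)^2) (at t)"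
    using DERIV_quotient[OF d0 d1 sq1ne] unfolding Pd_def[abs_def] by (simp add: numeral_2_eq_2)
  moreover have "((- 2 * sin t) * (1 + (cos t)\<^sup>2) - (- 2 * cos t * sin t) * (2 * cos t)) = - 2 * (sin t)^3"
  proof -
    have "(sin t)\<^sup>2 = 1 - (cos t)\<^sup>2" by (simp add: sin_squared_eq)
    then have "(sin t)^3 = sin t * (1 - (cos t)\<^sup>2)" by (metis power2_eq_square power3_eq_cube mult.assoc)
    then show ?thesis by (simp add: algebra_simps power2_eq_square)
  qed
  ultimately show ?thesis by simp
qed

lemma slp_deriv: "(slp has_real_derivative (- 2 * sl x ^ 3)) (at x)"
proof -
  have "(slp has_real_derivative - 2 * (sin (T x))^3 / (1 + (cos (T x))\<^sup>2)\<^sup>2 * sqrt (1 + (cos (T x))\<^sup>2)) (at x)"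
    unfolding slp_def[abs_def] by (rule DERIV_chain2[OF Pd_deriv T_deriv])
  moreover have "- 2 * (sin (T x))^3 / (1 + (cos (T x))\<^sup>2)\<^sup>2 * sqrt (1 + (cos (T x))\<^sup>2) = - 2 * sl x ^ 3"
  proof -
    define q where "q = sqrt (1 + (cos (T x))\<^sup>2)"
    have q0: "q > 0" unfolding q_def using sq1pos by simp
    have q2: "1 + (cos (T x))\<^sup>2 = q\<^sup>2" unfolding q_def using sq_nonneg_le by simp
    show ?thesis unfolding sl_def R_def q_def[symmetric] q2 using q0
      by (simp add: field_simps power2_eq_square power3_eq_cube)
  qed
  ultimately show ?thesis by simp
qed

lemma energy: "(slp x)\<^sup>2 + (sl x)^4 = 1"
proof -
  define c where "c = cos (T x)"
  define s where "s = sin (T x)"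
  have sc: "s\<^sup>2 = 1 - c\<^sup>2" unfolding s_def c_def by (simp add: sin_squared_eq)
  have p: "0 < 1 + c\<^sup>2" unfolding c_def by (rule sq1pos)
  have "(slp x)\<^sup>2 = 4 * c\<^sup>2 / (1 + c\<^sup>2)\<^sup>2" unfolding slp_def Pd_def c_def by (simp add: power_divide power_mult_distrib)
  moreover have "(sl x)^4 = (s\<^sup>2)\<^sup>2 / (1 + c\<^sup>2)\<^sup>2"
  proof -
    have "sqrt (1 + c\<^sup>2) ^ 4 = (sqrt (1 + c\<^sup>2) ^ 2)^2" by (simp only: power4_eq_xxxx power2_eq_square mult.assoc)
    also have "\<dots> = (1 + c\<^sup>2)\<^sup>2" using p by simp
    finally have "sqrt (1 + c\<^sup>2) ^ 4 = (1 + c\<^sup>2)\<^sup>2" .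
    then show ?thesis unfolding sl_def R_def s_def c_def by (simp add: power_divide)
  qed
  ultimately have "(slp x)\<^sup>2 + (sl x)^4 = (4 * c\<^sup>2 + (1 - c\<^sup>2)\<^sup>2) / (1 + c\<^sup>2)\<^sup>2"
    unfolding sc by (simp add: add_divide_distrib)
  also have "4 * c\<^sup>2 + (1 - c\<^sup>2)\<^sup>2 = (1 + c\<^sup>2)\<^sup>2" by (simp add: power2_eq_square algebra_simps)
  finally show ?thesis using p by simp
qed

lemma sl0: "sl 0 = 0" and slp0: "slp 0 = 1"
proof -
  have "T 0 = 0" using T_Phi[of 0] by (simp add: Phi0)
  then show "sl 0 = 0" "slp 0 = 1" by (simp_all add: sl_def R_def slp_def Pd_def)
qed

lemma sl_bound: "\<bar>sl x\<bar> \<le> 1" using energy[of x] by (intro bound_from_energy[of "slp x"]) simp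



lemma dup_deriv1:
  fixes r p :: "real \<Rightarrow> real"
  assumes dr: "\<And>x. (r has_real_derivative p x / 2) (at x)"
    and dp: "\<And>x. (p has_real_derivative (- ((r x)^3))) (at x)"
    and en: "\<And>x. (p x)\<^sup>2 + (r x)^4 = 1"
  shows "((\<lambda>x. 2 * r x * p x / (1 + r x ^ 4)) has_real_derivative (1 - 6 * r x ^ 4 + r x ^ 8) / (1 + r x ^ 4)\<^sup>2) (at x)"
proof -
  have D: "1 + r x ^ 4 \<noteq> 0" by (metis add_pos_nonneg zero_less_one zero_le_power_eq_numeral even_numeral less_irrefl zero_le_even_power)
  have P2: "(p x)\<^sup>2 = 1 - r x ^ 4" using en[of x] by simp
  show ?thesis
    apply (rule derivative_eq_intros dr dp refl)+
     apply (rule D)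
    apply (simp add: divide_simps D)
    using P2 by algebra
qed

lemma dup_deriv2:
  fixes r p :: "real \<Rightarrow> real"
  assumes dr: "\<And>x. (r has_real_derivative p x / 2) (at x)"
    and dp: "\<And>x. (p has_real_derivative (- ((r x)^3))) (at x)"
    and en: "\<And>x. (p x)\<^sup>2 + (r x)^4 = 1"
  shows "((\<lambda>x. (1 - 6 * r x ^ 4 + r x ^ 8) / (1 + r x ^ 4)\<^sup>2) has_real_derivative (- 2 * (2 * r x * p x / (1 + r x ^ 4))^3)) (at x)"
proof -
  have D: "1 + r x ^ 4 \<noteq> 0" by (metis add_pos_nonneg zero_less_one zero_le_power_eq_numeral even_numeral less_irrefl zero_le_even_power)
  have P2: "(p x)\<^sup>2 = 1 - r x ^ 4" using en[of x] by simp
  show ?thesis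
    apply (rule derivative_eq_intros dr dp refl)+
     apply (simp add: D)
    apply (simp add: divide_simps D)
    using P2 by algebra
qed

lemma final_alg:
  fixes s y :: real
  assumes s0: "s \<noteq> 0" and y0: "0 \<le> y" and y1: "y \<le> 1"
    and dup: "s\<^sup>2 * (1 + y\<^sup>2)\<^sup>2 = 4 * y * (1 - y\<^sup>2)"
  shows "0 \<le> 1 - 2*y - y\<^sup>2 \<Longrightarrow> y = (- 1 + sqrt (1 - s\<^sup>2)) / s\<^sup>2
              + sqrt (1 + s\<^sup>2) / s\<^sup>2 * sqrt (2 - s\<^sup>2 - 2 * sqrt (1 - s\<^sup>2))"
    and "1 - 2*y - y\<^sup>2 \<le> 0 \<Longrightarrow> y = (- 1 - sqrt (1 - s\<^sup>2)) / s\<^sup>2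
              + sqrt (1 + s\<^sup>2) / s\<^sup>2 * sqrt (2 - s\<^sup>2 + 2 * sqrt (1 - s\<^sup>2))"
proof -
  define D where "D = 1 + y\<^sup>2"
  define g where "g = 1 - 2*y - y\<^sup>2"
  define b where "b = (1 + 2*y - y\<^sup>2) / D"
  define a where "a = sqrt (1 - s\<^sup>2)"
  have D0: "0 < D" unfolding D_def by (simp add: add_pos_nonneg)
  have s2: "s\<^sup>2 = 4 * y * (1 - y\<^sup>2) / D\<^sup>2" using dup D0 unfolding D_def[symmetric]
    by (simp add: field_simps)
  have s2pos: "0 < s\<^sup>2" using s0 by simp
  have e1: "1 - s\<^sup>2 = (g / D)\<^sup>2"
  proof -
    have "1 - s\<^sup>2 = (D\<^sup>2 - 4 * y * (1 - y\<^sup>2)) / D\<^sup>2" using D0 by (simp add: s2 field_simps)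
    also have "D\<^sup>2 - 4 * y * (1 - y\<^sup>2) = g\<^sup>2" by (simp add: D_def g_def power2_eq_square algebra_simps)
    finally show ?thesis by (simp add: power_divide)
  qed
  have e2: "1 + s\<^sup>2 = ((1 + 2*y - y\<^sup>2) / D)\<^sup>2"
  proof -
    have "1 + s\<^sup>2 = (D\<^sup>2 + 4 * y * (1 - y\<^sup>2)) / D\<^sup>2" using D0 by (simp add: s2 field_simps)
    also have "D\<^sup>2 + 4 * y * (1 - y\<^sup>2) = (1 + 2*y - y\<^sup>2)\<^sup>2" by (simp add: D_def power2_eq_square algebra_simps)
    finally show ?thesis by (simp add: power_divide)
  qed
  have yy: "y\<^sup>2 \<le> y" using y0 y1 by (simp add: power2_eq_square mult_left_le)
  have h1: "0 \<le> 1 + 2*y - y\<^sup>2" using y0 yy by linarith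
  have bb: "sqrt (1 + s\<^sup>2) = b" unfolding e2 b_def using h1 D0 by simp
  have aa: "a = \<bar>g\<bar> / D" unfolding a_def e1 using D0 by (simp add: real_sqrt_abs abs_div)
  have a2: "a\<^sup>2 = 1 - s\<^sup>2" unfolding a_def e1 by (simp only: real_sqrt_pow2_iff zero_le_power2)
  have key: "(D - g) * (1 + 2*y - y\<^sup>2 - D) = y * (4 * y * (1 - y\<^sup>2))"
    unfolding D_def g_def by (simp add: algebra_simps power2_eq_square)
  have Dg: "0 \<le> D - g" unfolding D_def g_def using y0 by simp
  have Dg2: "0 \<le> D + g" unfolding D_def g_def using y1 by simp
  show "0 \<le> 1 - 2*y - y\<^sup>2 \<Longrightarrow> y = (- 1 + sqrt (1 - s\<^sup>2)) / s\<^sup>2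
              + sqrt (1 + s\<^sup>2) / s\<^sup>2 * sqrt (2 - s\<^sup>2 - 2 * sqrt (1 - s\<^sup>2))"
  proof -
    assume "0 \<le> 1 - 2*y - y\<^sup>2"
    then have ag: "a = g / D" unfolding aa g_def by simp
    have a1: "0 \<le> 1 - a" unfolding ag using D0 Dg by (simp add: field_simps)
    have "2 - s\<^sup>2 - 2 * a = (1 - a)\<^sup>2" using a2 by (simp add: power2_eq_square algebra_simps)
    then have sq: "sqrt (2 - s\<^sup>2 - 2 * a) = 1 - a" using a1 by simp
    have "y * s\<^sup>2 = (1 - a) * (b - 1)"
      unfolding s2 ag b_def using D0 key by (simp add: field_simps power2_eq_square)
    then have "y = ((1 - a) * (b - 1)) / s\<^sup>2" using s2pos by (simp add: eq_divide_eq)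
    also have "\<dots> = (- 1 + a) / s\<^sup>2 + b / s\<^sup>2 * (1 - a)"
      by (simp add: add_divide_distrib[symmetric] diff_divide_distrib[symmetric] times_divide_eq_left algebra_simps)
    finally have "y = (- 1 + a) / s\<^sup>2 + b / s\<^sup>2 * (1 - a)" .
    then show ?thesis unfolding a_def[symmetric] bb sq .
  qed
  show "1 - 2*y - y\<^sup>2 \<le> 0 \<Longrightarrow> y = (- 1 - sqrt (1 - s\<^sup>2)) / s\<^sup>2
              + sqrt (1 + s\<^sup>2) / s\<^sup>2 * sqrt (2 - s\<^sup>2 + 2 * sqrt (1 - s\<^sup>2))"
  proof -
    assume "1 - 2*y - y\<^sup>2 \<le> 0"
    then have ag: "a = - g / D" unfolding aa g_def by simp
    have a1: "0 \<le> 1 + a" unfolding ag using D0 Dg by (simp add: field_simps)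
    have "2 - s\<^sup>2 + 2 * a = (1 + a)\<^sup>2" using a2 by (simp add: power2_eq_square algebra_simps)
    then have sq: "sqrt (2 - s\<^sup>2 + 2 * a) = 1 + a" using a1 by simp
    have "y * s\<^sup>2 = (1 + a) * (b - 1)"
      unfolding s2 ag b_def using D0 key by (simp add: field_simps power2_eq_square)
    then have "y = ((1 + a) * (b - 1)) / s\<^sup>2" using s2pos by (simp add: eq_divide_eq)
    also have "\<dots> = (- 1 - a) / s\<^sup>2 + b / s\<^sup>2 * (1 + a)"
      by (simp add: add_divide_distrib[symmetric] diff_divide_distrib[symmetric] times_divide_eq_left algebra_simps)
    finally have "y = (- 1 - a) / s\<^sup>2 + b / s\<^sup>2 * (1 + a)" .
    then show ?thesis unfolding a_def[symmetric] bb sq .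
  qed
qed

lemma sl_unique:
  fixes r q :: "real \<Rightarrow> real"
  assumes r0: "r 0 = 0" and q0: "q 0 = 1"
    and dr: "\<And>x. (r has_real_derivative q x) (at x)"
    and dq: "\<And>x. (q has_real_derivative (-2 * r x ^ 3)) (at x)"
  shows "r x = sl x"
proof (rule ode_unique[OF dr dq sl_deriv])
  show "(slp has_real_derivative (-2 * sl x ^ 3)) (at x)" for x using slp_deriv[of x] by simp
  show "\<bar>r x\<bar> \<le> 1" for x
    using energy_const[OF dr dq, of x] r0 q0 by (intro bound_from_energy[of "q x"]) simp
  show "\<bar>sl x\<bar> \<le> 1" for x by (rule sl_bound)
  show "r 0 = sl 0" "q 0 = slp 0" using r0 q0 sl0 slp0 by simp_all
qed

lemma sleaf2: "sleaf 2 = sl"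
  unfolding sleaf_def
proof (rule the_equality)
  show "\<exists>r'. sl 0 = 0 \<and> r' 0 = 1 \<and> (\<forall>x. (sl has_real_derivative r' x) (at x)) \<and>
      (\<forall>x. (r' has_real_derivative - real 2 * sl x ^ (2 * 2 - 1)) (at x))"
  proof -
    have d: "\<forall>x. (slp has_real_derivative - real 2 * sl x ^ (2 * 2 - 1)) (at x)"
    proof
      fix x
      have "- real 2 * sl x ^ (2 * 2 - 1) = - 2 * sl x ^ 3" by simp
      then show "(slp has_real_derivative - real 2 * sl x ^ (2 * 2 - 1)) (at x)"
        using slp_deriv[of x] by metis
    qed
    show ?thesis using sl0 slp0 sl_deriv d by blast
  qed
next
  fix r
  assume "\<exists>r'. r 0 = 0 \<and> r' 0 = 1 \<and> (\<forall>x. (r has_real_derivative r' x) (at x)) \<and>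
      (\<forall>x. (r' has_real_derivative - real 2 * r x ^ (2 * 2 - 1)) (at x))"
  then obtain q where h: "r 0 = 0" "q 0 = 1" "\<And>x. (r has_real_derivative q x) (at x)"
      "\<And>x. (q has_real_derivative - real 2 * r x ^ (2 * 2 - 1)) (at x)" by blast
  have dq: "(q has_real_derivative (-2 * r x ^ 3)) (at x)" for x using h(4)[of x] by simp
  show "r = sl" by (rule ext, rule sl_unique[OF h(1,2,3) dq])
qed

lemma sl_dup: "sl (2 * u) * (1 + sl u ^ 4) = 2 * sl u * slp u"
proof -
  define r where "r x = sl (x / 2)" for x
  define p where "p x = slp (x / 2)" for x
  have half: "((\<lambda>x. x / 2) has_real_derivative 1 / 2) (at x)" for x :: real
    by (auto intro!: derivative_eq_intros)
  have dr: "(r has_real_derivative p x / 2) (at x)" for x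
    using DERIV_chain2[OF sl_deriv half] unfolding r_def[abs_def] p_def by simp
  have dp: "(p has_real_derivative (- ((r x)^3))) (at x)" for x
    using DERIV_chain2[OF slp_deriv half] unfolding r_def p_def[abs_def] by simp
  have en: "(p x)\<^sup>2 + (r x)^4 = 1" for x unfolding r_def p_def by (rule energy)
  define h where "h x = 2 * r x * p x / (1 + r x ^ 4)" for x
  define H where "H x = (1 - 6 * r x ^ 4 + r x ^ 8) / (1 + r x ^ 4)\<^sup>2" for x
  have dh: "(h has_real_derivative H x) (at x)" for x
    unfolding h_def[abs_def] H_def by (rule dup_deriv1[OF dr dp en])
  have dH: "(H has_real_derivative (-2 * h x ^ 3)) (at x)" for x
    using dup_deriv2[OF dr dp en, of x] unfolding h_def H_def[abs_def] by simp
  have "h x = sl x" for x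
    by (rule sl_unique[OF _ _ dh dH]) (simp_all add: h_def H_def r_def p_def sl0 slp0)
  from this[of "2 * u"] have "sl (2 * u) = 2 * sl u * slp u / (1 + sl u ^ 4)"
    by (simp add: h_def r_def p_def)
  moreover have "1 + sl u ^ 4 \<noteq> 0"
    by (metis add_pos_nonneg zero_less_one zero_le_power_eq_numeral even_numeral less_irrefl zero_le_even_power)
  ultimately show ?thesis by simp
qed

lemma sl_dup_sq: "(sl (2 * u))\<^sup>2 * (1 + ((sl u)\<^sup>2)\<^sup>2)\<^sup>2 = 4 * (sl u)\<^sup>2 * (1 - ((sl u)\<^sup>2)\<^sup>2)"
proof -
  have "(sl (2 * u) * (1 + sl u ^ 4))\<^sup>2 = (2 * sl u * slp u)\<^sup>2" using sl_dup by simp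
  moreover have "(slp u)\<^sup>2 = 1 - sl u ^ 4" using energy[of u] by simp
  ultimately show ?thesis by (simp add: power_mult_distrib flip: power_mult)
qed

lemma T0: "T 0 = 0" using T_Phi[of 0] by (simp add: Phi0)

lemma sl_antiper: "sl (x + P0) = - sl x"
proof -
  have "T (x + P0) = T x + pi" using T_shift_int[of x 1] by simp
  then show ?thesis by (simp add: sl_def R_def)
qed

lemma sl_odd: "sl (- x) = - sl x" by (simp add: sl_def R_def T_odd)

lemma sl_refl: "sl (P0 - x) = sl x"
  using sl_antiper[of "- x"] by (simp add: sl_odd)

lemma sl_sq_shift: "(sl (x + of_int k * P0))\<^sup>2 = (sl x)\<^sup>2"
proof (induction k arbitrary: x rule: int_induct[where k=0])
  case base then show ?case by simp
next
  case (step1 i)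
  have "sl (x + of_int (i + 1) * P0) = sl ((x + of_int i * P0) + P0)" by (simp add: algebra_simps)
  then show ?case using step1 by (simp add: sl_antiper)
next
  case (step2 i)
  have "sl (x + of_int i * P0) = sl ((x + of_int (i - 1) * P0) + P0)" by (simp add: algebra_simps)
  then have "(sl (x + of_int i * P0))\<^sup>2 = (sl (x + of_int (i - 1) * P0))\<^sup>2" by (simp add: sl_antiper)
  then show ?case using step2 by simp
qed

lemma T_half: "T (P0 / 2) = pi / 2" using T_Phi[of "pi/2"] by (simp add: Phi_half)

lemma sl_half: "sl (P0 / 2) = 1" by (simp add: sl_def R_def T_half)

lemma T_strict: "a < b \<Longrightarrow> T a < T b"
  by (metis Phi_T T_mono order_le_less order_less_irrefl)

lemma slp_pos: "0 < x \<Longrightarrow> x < P0 / 2 \<Longrightarrow> 0 < slp x"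
proof -
  assume "0 < x" "x < P0 / 2"
  then have "0 < T x" "T x < pi / 2" using T_strict[of 0 x] T_strict[of x "P0/2"] by (simp_all add: T0 T_half)
  then have "0 < cos (T x)" by (rule cos_gt_zero)
  then show ?thesis by (simp add: slp_def Pd_def sq1pos)
qed

lemma slp_nonneg: "0 \<le> x \<Longrightarrow> x \<le> P0 / 2 \<Longrightarrow> 0 \<le> slp x"
proof -
  assume "0 \<le> x" "x \<le> P0 / 2"
  then have "0 \<le> T x" "T x \<le> pi / 2" using T_mono[of 0 x] T_mono[of x "P0/2"] by (simp_all add: T0 T_half)
  then have "0 \<le> cos (T x)" by (intro cos_ge_zero) simp_all
  then show ?thesis by (simp add: slp_def Pd_def sq1pos)
qed

lemma sl_mono: "0 \<le> a \<Longrightarrow> a \<le> b \<Longrightarrow> b \<le> P0 / 2 \<Longrightarrow> sl a \<le> sl b"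
  by (rule DERIV_nonneg_imp_nondecreasing[of a b sl]) (use sl_deriv slp_nonneg in force)+

lemma sl_nonneg: "0 \<le> x \<Longrightarrow> x \<le> P0 / 2 \<Longrightarrow> 0 \<le> sl x"
  using sl_mono[of 0 x] by (simp add: sl0)

lemma sl_cont: "continuous_on S sl"
  by (meson DERIV_isCont continuous_at_imp_continuous_on sl_deriv)

lemma sl_strict: "0 \<le> a \<Longrightarrow> a < b \<Longrightarrow> b \<le> P0 / 2 \<Longrightarrow> sl a < sl b"
  by (rule DERIV_pos_imp_increasing_open[of a b sl]) (use sl_deriv slp_pos sl_cont in force)+

lemma pi_leaf2: "pi_leaf 2 = P0"
proof -
  define X where "X = P0 / 2"
  have X0: "0 < X" using P0_pos by (simp add: X_def)
  have inj: "inj_on sl {0..X}"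
  proof (rule linorder_inj_onI)
    fix x y assume "x < y" "x \<in> {0..X}" "y \<in> {0..X}"
    then show "sl x \<noteq> sl y" using sl_strict[of x y] by (simp add: X_def)
  qed auto
  have img: "sl ` {0..X} = {0..1}"
  proof
    show "sl ` {0..X} \<subseteq> {0..1}"
      using sl_nonneg sl_mono[of _ X] sl_half X_def by auto
    show "{0..1} \<subseteq> sl ` {0..X}"
    proof
      fix t :: real assume "t \<in> {0..1}"
      then obtain x where "0 \<le> x" "x \<le> X" "sl x = t"
        using IVT[of sl 0 t X] sl0 sl_half X0 sl_deriv DERIV_isCont unfolding X_def by force
      then show "t \<in> sl ` {0..X}" by force
    qed
  qed
  define G where "G = inv_into {0..X} sl"
  have GS: "G (sl x) = x" if "x \<in> {0..X}" for x using inv_into_f_f[OF inj that] by (simp add: G_def)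
  have SG: "sl (G t) = t" "G t \<in> {0..X}" if "t \<in> {0..1}" for t
    using that img f_inv_into_f[of t sl "{0..X}"] inv_into_into[of t sl "{0..X}"] by (auto simp: G_def)
  have Gc: "continuous_on {0..1} G"
  proof -
    have "continuous_on (sl ` {0..X}) G"
      by (rule continuous_on_inv[OF sl_cont compact_Icc]) (use GS in blast)
    then show ?thesis using img by simp
  qed
  have dG: "(G has_real_derivative 1 / sqrt (1 - t ^ 4)) (at t)" if t: "t \<in> {0<..<1}" for t
  proof -
    have t01: "t \<in> {0..1}" using t by auto
    have "G t \<noteq> 0" using SG(1)[OF t01] t sl0 by auto
    moreover have "G t \<noteq> X"
    proof
      assume "G t = X"
      then have "sl (G t) = 1" using sl_half unfolding X_def by metis
      then show False using SG(1)[OF t01] t by simp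
    qed
    ultimately have "0 < G t" "G t < X" using SG(2)[OF t01] by auto
    then have sp: "0 < slp (G t)" using slp_pos X_def by simp
    have "(slp (G t))\<^sup>2 = 1 - t ^ 4" using energy[of "G t"] SG(1)[OF t01] by simp
    then have sq: "sqrt (1 - t ^ 4) = slp (G t)" using sp by (metis less_eq_real_def real_sqrt_unique)
    have "isCont G t" using continuous_on_interior[OF Gc] t by simp
    then have "(G has_real_derivative inverse (slp (G t))) (at t)"
      by (intro DERIV_inverse_function[where a=0 and b=1 and f=sl]) (use sl_deriv sp t SG in auto)
    then show ?thesis using sq by (simp add: divide_inverse)
  qed
  have "((\<lambda>t. 1 / sqrt (1 - t ^ 4)) has_integral (G 1 - G 0)) {0..1}"
    by (rule fundamental_theorem_of_calculus_interior[OF _ Gc])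
       (use dG in \<open>auto simp: has_real_derivative_iff_has_vector_derivative\<close>)
  moreover have "G 1 = X" using GS[of X] sl_half X0 X_def by auto
  moreover have "G 0 = 0" using GS[of 0] sl0 X0 by auto
  ultimately have "integral {0..1} (\<lambda>t. 1 / sqrt (1 - t ^ 4)) = X" by (simp add: integral_unique)
  then show ?thesis by (simp add: pi_leaf_def X_def)
qed


lemma sl_sq_le1: "(sl x)\<^sup>2 \<le> 1" using sl_bound[of x] by (simp add: abs_square_le_1)

lemma quarter: "((sl (P0/4))\<^sup>2)\<^sup>2 + 2 * (sl (P0/4))\<^sup>2 = 1"
proof -
  define q where "q = (sl (P0/4))\<^sup>2"
  have "(sl (2 * (P0/4)))\<^sup>2 * (1 + q\<^sup>2)\<^sup>2 = 4 * q * (1 - q\<^sup>2)"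
    using sl_dup_sq[of "P0/4"] by (simp add: q_def)
  moreover have "2 * (P0/4) = P0/2" by simp
  ultimately have "(1 + q\<^sup>2)\<^sup>2 = 4 * q * (1 - q\<^sup>2)" using sl_half by simp
  then have "(1 - 2*q - q\<^sup>2)\<^sup>2 = 0" by (simp add: power2_eq_square algebra_simps)
  then have "1 - 2*q - q\<^sup>2 = 0" by simp
  then show ?thesis unfolding q_def[symmetric] by simp
qed

lemma branch_ii:
  assumes "- (P0/4) \<le> v" "v \<le> P0/4"
  shows "0 \<le> 1 - 2 * (sl v)\<^sup>2 - ((sl v)\<^sup>2)\<^sup>2"
proof -
  define w where "w = \<bar>v\<bar>"
  have sw: "(sl v)\<^sup>2 = (sl w)\<^sup>2" unfolding w_def by (cases "v < 0") (simp_all add: sl_odd abs_if)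
  have w0: "0 \<le> w" "w \<le> P0/4" using assms by (auto simp: w_def)
  have P: "0 < P0" by (rule P0_pos)
  have "sl w \<le> sl (P0/4)" using w0 P by (intro sl_mono) auto
  moreover have "0 \<le> sl w" using w0 P by (intro sl_nonneg) auto
  ultimately have le: "(sl w)\<^sup>2 \<le> (sl (P0/4))\<^sup>2" by (intro power_mono) auto
  have le2: "((sl w)\<^sup>2)\<^sup>2 \<le> ((sl (P0/4))\<^sup>2)\<^sup>2" by (rule power_mono[OF le]) simp
  show ?thesis unfolding sw using le le2 quarter by linarith
qed

lemma branch_i:
  assumes "P0/4 \<le> v" "v \<le> 3 * P0/4"
  shows "1 - 2 * (sl v)\<^sup>2 - ((sl v)\<^sup>2)\<^sup>2 \<le> 0"
proof -
  define w where "w = (if v \<le> P0/2 then v else P0 - v)"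
  have sw: "sl v = sl w" unfolding w_def by (simp add: sl_refl)
  have w0: "P0/4 \<le> w" "w \<le> P0/2" using assms by (auto simp: w_def)
  have P: "0 < P0" by (rule P0_pos)
  have "sl (P0/4) \<le> sl w" using w0 P by (intro sl_mono) auto
  moreover have "0 \<le> sl (P0/4)" using P by (intro sl_nonneg) auto
  ultimately have le: "(sl (P0/4))\<^sup>2 \<le> (sl w)\<^sup>2" by (intro power_mono) auto
  have le2: "((sl (P0/4))\<^sup>2)\<^sup>2 \<le> ((sl w)\<^sup>2)\<^sup>2" by (rule power_mono[OF le]) simp
  show ?thesis unfolding sw using le le2 quarter by linarith
qed

theorem mainTheorem12:
  fixes m :: int and l s :: real
  assumes hs: "s = sleaf 2 l"
    and hs0: "s \<noteq> 0"
  shows "(pi_leaf 2 / 2 * (4 * real_of_int m + 1) \<le> l \<and> l \<le> pi_leaf 2 / 2 * (4 * real_of_int m + 3) \<longrightarrow>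
           (sleaf 2 (l / 2))\<^sup>2 = (- 1 - sqrt (1 - s\<^sup>2)) / s\<^sup>2
              + sqrt (1 + s\<^sup>2) / s\<^sup>2 * sqrt (2 - s\<^sup>2 + 2 * sqrt (1 - s\<^sup>2)))
       \<and> (pi_leaf 2 / 2 * (4 * real_of_int m - 1) \<le> l \<and> l \<le> pi_leaf 2 / 2 * (4 * real_of_int m + 1) \<longrightarrow>
           (sleaf 2 (l / 2))\<^sup>2 = (- 1 + sqrt (1 - s\<^sup>2)) / s\<^sup>2
              + sqrt (1 + s\<^sup>2) / s\<^sup>2 * sqrt (2 - s\<^sup>2 - 2 * sqrt (1 - s\<^sup>2)))"
proof -
  define y where "y = (sl (l / 2))\<^sup>2"
  have s_eq: "s = sl l" using hs by (simp add: sleaf2)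
  have y0: "0 \<le> y" unfolding y_def by simp
  have y1: "y \<le> 1" unfolding y_def by (rule sl_sq_le1)
  have dup: "s\<^sup>2 * (1 + y\<^sup>2)\<^sup>2 = 4 * y * (1 - y\<^sup>2)"
    using sl_dup_sq[of "l/2"] unfolding s_eq y_def by simp
  define v where "v = l / 2 - real_of_int m * P0"
  have yv: "y = (sl v)\<^sup>2"
    using sl_sq_shift[of v m] unfolding y_def v_def by simp
  show ?thesis
  proof (intro conjI impI)
    assume "pi_leaf 2 / 2 * (4 * real_of_int m + 1) \<le> l \<and> l \<le> pi_leaf 2 / 2 * (4 * real_of_int m + 3)"
    then have "P0/4 \<le> v" "v \<le> 3 * P0/4" unfolding pi_leaf2 v_def by (auto simp: algebra_simps)
    then have "1 - 2 * y - y\<^sup>2 \<le> 0" unfolding yv by (rule branch_i)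
    then have "y = (- 1 - sqrt (1 - s\<^sup>2)) / s\<^sup>2
              + sqrt (1 + s\<^sup>2) / s\<^sup>2 * sqrt (2 - s\<^sup>2 + 2 * sqrt (1 - s\<^sup>2))"
      by (rule final_alg(2)[OF hs0 y0 y1 dup])
    then show "(sleaf 2 (l / 2))\<^sup>2 = (- 1 - sqrt (1 - s\<^sup>2)) / s\<^sup>2
              + sqrt (1 + s\<^sup>2) / s\<^sup>2 * sqrt (2 - s\<^sup>2 + 2 * sqrt (1 - s\<^sup>2))"
      by (simp add: sleaf2 y_def)
  next
    assume "pi_leaf 2 / 2 * (4 * real_of_int m - 1) \<le> l \<and> l \<le> pi_leaf 2 / 2 * (4 * real_of_int m + 1)"
    then have "- (P0/4) \<le> v" "v \<le> P0/4" unfolding pi_leaf2 v_def by (auto simp: algebra_simps)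
    then have "0 \<le> 1 - 2 * y - y\<^sup>2" unfolding yv by (rule branch_ii)
    then have "y = (- 1 + sqrt (1 - s\<^sup>2)) / s\<^sup>2
              + sqrt (1 + s\<^sup>2) / s\<^sup>2 * sqrt (2 - s\<^sup>2 - 2 * sqrt (1 - s\<^sup>2))"
      by (rule final_alg(1)[OF hs0 y0 y1 dup])
    then show "(sleaf 2 (l / 2))\<^sup>2 = (- 1 + sqrt (1 - s\<^sup>2)) / s\<^sup>2
              + sqrt (1 + s\<^sup>2) / s\<^sup>2 * sqrt (2 - s\<^sup>2 - 2 * sqrt (1 - s\<^sup>2))"
      by (simp add: sleaf2 y_def)
  qed
qed

end
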